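(* Let $G$ be a finite digraph such that $\mathrm{Pol}(G)\models\Sigma_M$ and $\mathrm{Pol}(G)\models\Sigma_p$ for all primes $p$. Then $P_2\le G$.
   Context: A digraph is $(V,E)$ with $E\subseteq V^2$; $H^k$ is the digraph on $V^k$ with edges $((u_i),(v_i))$ whenever $(u_i,v_i)\in E$ for all $i$. A polymorphism of $H$ of arity $k$ is a homomorphism $H^k\to H$; $\mathrm{Pol}(H)$ is the set of all polymorphisms. $\mathrm{Pol}(H)\models\Sigma_n$ means there is an $n$-ary $f\in\mathrm{Pol}(H)$ with $f(x_1,x_2,\dots,x_n)=f(x_2,\dots,x_n,x_1)$ for all $x_i\in V$ (a cyclic polymorphism). $\mathrm{Pol}(H)\models\Sigma_M$ means there is a ternary $f\in\mathrm{Pol}(H)$ with $f(y,y,x)=f(x,x,x)=f(x,y,y)$ for all $x,y\in V$. A primitive positive formula is $\exists y_1,\dots,y_n(\psi_1\wedge\dots\wedge\psi_m)$ with each $\psi_i$ being $\bot$, $z_1=z_2$, or $E(z_1,z_2)$; a pp power of $H$ of dimension $d$ is the digraph on $V^d$ with edges $\{(u,v):\phi(u,v)\text{ holds in }H\}$ for a pp formula $\phi(x_1,\dots,x_d,y_1,\dots,y_d)$. $H\le G$ means $G$ is homomorphically equivalent (homomorphisms both ways) to a pp power of $H$. $P_2$ has vertices $\{0,1\}$ and the single edge $(0,1)$. *)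

theory Defs
  imports Main "HOL-Computational_Algebra.Primes"
begin

type_synonym 'a digraph = "'a set \<times> ('a \<times> 'a) set"

definition verts :: "'a digraph \<Rightarrow> 'a set" where "verts G = fst G"
definition edges :: "'a digraph \<Rightarrow> ('a \<times> 'a) set" where "edges G = snd G"

definition digraph :: "'a digraph \<Rightarrow> bool" where
  "digraph G \<longleftrightarrow> edges G \<subseteq> verts G \<times> verts G"

definition tuples :: "'a set \<Rightarrow> nat \<Rightarrow> 'a list set" where
  "tuples V k = {xs. length xs = k \<and> set xs \<subseteq> V}"

definition power_digraph :: "'a digraph \<Rightarrow> nat \<Rightarrow> 'a list digraph" where
  "power_digraph H k =
     (tuples (verts H) k,
      {(us, vs). us \<in> tuples (verts H) k \<and> vs \<in> tuples (verts H) k \<and>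
                 (\<forall>i<k. (us ! i, vs ! i) \<in> edges H)})"

definition hom :: "('a \<Rightarrow> 'b) \<Rightarrow> 'a digraph \<Rightarrow> 'b digraph \<Rightarrow> bool" where
  "hom h G H \<longleftrightarrow> (\<forall>x\<in>verts G. h x \<in> verts H) \<and>
                  (\<forall>(x, y)\<in>edges G. (h x, h y) \<in> edges H)"

definition hom_equiv :: "'a digraph \<Rightarrow> 'b digraph \<Rightarrow> bool" where
  "hom_equiv G H \<longleftrightarrow> (\<exists>h. hom h G H) \<and> (\<exists>g. hom g H G)"

definition polymorphism :: "'a digraph \<Rightarrow> nat \<Rightarrow> ('a list \<Rightarrow> 'a) \<Rightarrow> bool" where
  "polymorphism H k f \<longleftrightarrow> hom f (power_digraph H k) H"

text \<open>Pol(H) satisfies Sigma_n: an n-ary cyclic polymorphism.\<close>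
definition has_cyclic_pol :: "'a digraph \<Rightarrow> nat \<Rightarrow> bool" where
  "has_cyclic_pol H n \<longleftrightarrow> (\<exists>f. polymorphism H n f \<and>
      (\<forall>xs\<in>tuples (verts H) n. f xs = f (rotate1 xs)))"

definition has_SigmaM_pol :: "'a digraph \<Rightarrow> bool" where
  "has_SigmaM_pol H \<longleftrightarrow> (\<exists>f. polymorphism H 3 f \<and>
      (\<forall>x\<in>verts H. \<forall>y\<in>verts H. f [y, y, x] = f [x, x, x] \<and> f [x, x, x] = f [x, y, y]))"

text \<open>In a pp formula of dimension d, variables 0..<d are x_1..x_d, variables d..<2d are
  y_1..y_d and all other variables are existentially quantified.\<close>
datatype atom = Bot | Eq nat nat | Edge nat nat

fun atom_sat :: "'a digraph \<Rightarrow> (nat \<Rightarrow> 'a) \<Rightarrow> atom \<Rightarrow> bool" where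
  "atom_sat H a Bot = False"
| "atom_sat H a (Eq i j) = (a i = a j)"
| "atom_sat H a (Edge i j) = ((a i, a j) \<in> edges H)"

definition pp_holds :: "'a digraph \<Rightarrow> nat \<Rightarrow> atom list \<Rightarrow> 'a list \<Rightarrow> 'a list \<Rightarrow> bool" where
  "pp_holds H d phi us vs \<longleftrightarrow>
     (\<exists>a. (\<forall>i. a i \<in> verts H) \<and> (\<forall>i<d. a i = us ! i \<and> a (d + i) = vs ! i) \<and>
          (\<forall>psi\<in>set phi. atom_sat H a psi))"

definition pp_power :: "'a digraph \<Rightarrow> nat \<Rightarrow> atom list \<Rightarrow> 'a list digraph" where
  "pp_power H d phi =
     (tuples (verts H) d,
      {(us, vs). us \<in> tuples (verts H) d \<and> vs \<in> tuples (verts H) d \<and> pp_holds H d phi us vs})"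

definition pp_le :: "'a digraph \<Rightarrow> 'b digraph \<Rightarrow> bool" where
  "pp_le H G \<longleftrightarrow> (\<exists>d phi. hom_equiv G (pp_power H d phi))"

definition P2 :: "nat digraph" where
  "P2 = ({0, 1}, {(0, 1)})"

end

theory Submission
  imports Defs
begin

locale zz =
  fixes E :: "('a \<times> 'a) set" and g :: "'a \<Rightarrow> 'a" and n :: nat
  assumes zig: "\<And>x y z w k. (x,z) \<in> E^^k \<Longrightarrow> (y,z) \<in> E^^k \<Longrightarrow> (y,w) \<in> E^^k \<Longrightarrow> (g x, g w) \<in> E^^k"
  and bnd: "\<And>x y k. (x,y) \<in> E^^k \<Longrightarrow> k \<le> n"
begin

lemma rg: "(x,y) \<in> E^^k \<Longrightarrow> (g x, g y) \<in> E^^k"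
  using zig by blast

inductive sw :: "'a \<Rightarrow> (bool \<times> nat) list \<Rightarrow> 'a \<Rightarrow> bool" where
  nil: "sw x [] x"
| fw: "(x,y) \<in> E^^k \<Longrightarrow> sw y S z \<Longrightarrow> sw x ((True,k)#S) z"
| bw: "(y,x) \<in> E^^k \<Longrightarrow> sw y S z \<Longrightarrow> sw x ((False,k)#S) z"

definition netv :: "(bool \<times> nat) list \<Rightarrow> int" where
  "netv S = sum_list (map (\<lambda>(b,k). if b then int k else - int k) S)"

lemma netv_simps[simp]: "netv [] = 0" "netv ((True,k)#S) = int k + netv S"
  "netv ((False,k)#S) = - int k + netv S" "netv (A @ B) = netv A + netv B"
  by (auto simp: netv_def)

lemma sw_Cons_iff: "sw x ((b,k)#S) z \<longleftrightarrow> (\<exists>y. (if b then (x,y) \<in> E^^k else (y,x) \<in> E^^k) \<and> sw y S z)"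
  by (cases b) (auto elim: sw.cases intro: sw.intros)

lemma sw_app: "sw x (A @ B) z \<longleftrightarrow> (\<exists>y. sw x A y \<and> sw y B z)"
proof (induction A arbitrary: x)
  case Nil
  then show ?case by (auto elim: sw.cases intro: sw.intros)
next
  case (Cons a A)
  obtain b k where a: "a = (b,k)" by force
  show ?case unfolding a append_Cons sw_Cons_iff Cons by blast
qed

lemma sw_g: "sw x S z \<Longrightarrow> sw (g x) S (g z)"
  by (induction rule: sw.induct) (auto intro: sw.intros rg)

lemma split_pow: "(x,y) \<in> E^^(a+b) \<Longrightarrow> \<exists>p. (x,p) \<in> E^^a \<and> (p,y) \<in> E^^b"
  by (auto simp: relpow_add)

lemma join_pow: "(x,p) \<in> E^^a \<Longrightarrow> (p,y) \<in> E^^b \<Longrightarrow> (x,y) \<in> E^^(a+b)"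
  by (auto simp: relpow_add)

lemma red_T: assumes "sw x [(True,a),(False,b),(True,c)] z" "b \<le> a" "b \<le> c"
  shows "sw (g x) [(True,a+c-b)] (g z)"
proof -
  from assms(1) obtain y z' where 1: "(x,y) \<in> E^^a" and 2: "(z',y) \<in> E^^b" and 3: "(z',z) \<in> E^^c"
    by (auto simp: sw_Cons_iff elim: sw.cases)
  from 1 assms(2) obtain p where p1: "(x,p) \<in> E^^(a-b)" and p2: "(p,y) \<in> E^^b"
    using split_pow[of x y "a-b" b] by auto
  from 3 assms(3) obtain q where q1: "(z',q) \<in> E^^b" and q2: "(q,z) \<in> E^^(c-b)"
    using split_pow[of z' z b "c-b"] by auto
  have "(g p, g q) \<in> E^^b" using zig[OF p2 2 q1] .
  then have "(g x, g z) \<in> E^^((a-b) + b + (c-b))"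
    using join_pow rg[OF p1] rg[OF q2] by blast
  moreover have "(a-b) + b + (c-b) = a+c-b" using assms by simp
  ultimately show ?thesis by (auto intro: sw.intros)
qed

lemma red_F: assumes "sw x [(False,a),(True,b),(False,c)] z" "b \<le> a" "b \<le> c"
  shows "sw (g x) [(False,a+c-b)] (g z)"
proof -
  from assms(1) obtain y z' where 1: "(y,x) \<in> E^^a" and 2: "(y,z') \<in> E^^b" and 3: "(z,z') \<in> E^^c"
    by (auto simp: sw_Cons_iff elim: sw.cases)
  from 1 assms(2) obtain p where p1: "(y,p) \<in> E^^b" and p2: "(p,x) \<in> E^^(a-b)"
    using split_pow[of y x b "a-b"] by auto
  from 3 assms(3) obtain q where q1: "(z,q) \<in> E^^(c-b)" and q2: "(q,z') \<in> E^^b"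
    using split_pow[of z z' "c-b" b] by auto
  have "(g q, g p) \<in> E^^b" using zig[OF q2 2 p1] .
  then have "(g z, g x) \<in> E^^((c-b) + b + (a-b))"
    using join_pow rg[OF p2] rg[OF q1] by blast
  moreover have "(c-b) + b + (a-b) = a+c-b" using assms by simp
  ultimately have "(g z, g x) \<in> E^^(a+c-b)" by (metis add.commute)
  then show ?thesis by (auto intro: sw.intros)
qed

lemma merge: assumes "sw x [(s,a),(s,b)] z" shows "sw x [(s,a+b)] z"
proof (cases s)
  case True
  then show ?thesis using assms by (auto simp: sw_Cons_iff elim: sw.cases intro: sw.intros join_pow)
next
  case False
  with assms obtain y ya where "(y,x) \<in> E^^a" "(ya,y) \<in> E^^b" "ya = z"
    by (auto simp: sw_Cons_iff elim: sw.cases)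
  then have "(z,x) \<in> E^^(a+b)" using join_pow[of z y b x a] by (simp add: add.commute)
  then show ?thesis using False by (auto intro: sw.intros)
qed

lemma split3: assumes "i+2 < length S" shows "S = take i S @ [S!i, S!Suc i, S!Suc(Suc i)] @ drop (i+3) S"
proof -
  have a: "drop i S = S!i # drop (Suc i) S" using assms by (simp add: Cons_nth_drop_Suc)
  have b: "drop (Suc i) S = S!Suc i # drop (Suc (Suc i)) S" using assms by (simp add: Cons_nth_drop_Suc)
  have c: "drop (Suc (Suc i)) S = S!Suc (Suc i) # drop (i+3) S" using assms
    using Cons_nth_drop_Suc[of "Suc (Suc i)" S] by (simp add: numeral_3_eq_3)
  have "S = take i S @ drop i S" by simp
  also have "\<dots> = take i S @ [S!i, S!Suc i, S!Suc(Suc i)] @ drop (i+3) S" using a b c by simp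
  finally show ?thesis .
qed

lemma split2: assumes "i+1 < length S" shows "S = take i S @ [S!i, S!Suc i] @ drop (i+2) S"
proof -
  have a: "drop i S = S!i # drop (Suc i) S" using assms by (simp add: Cons_nth_drop_Suc)
  have b: "drop (Suc i) S = S!Suc i # drop (i+2) S" using assms
    using Cons_nth_drop_Suc[of "Suc i" S] by simp
  have "S = take i S @ drop i S" by simp
  also have "\<dots> = take i S @ [S!i, S!Suc i] @ drop (i+2) S" using a b by simp
  finally show ?thesis .
qed

lemma net_bound: "sw x S z \<Longrightarrow> netv S \<le> int n"
proof (induction "length S" arbitrary: S x z rule: less_induct)
  case less
  show ?case
  proof (rule ccontr)
    assume gt: "\<not> netv S \<le> int n"
    define L where "L = length S"
    have dropok: "False" if "length S' < L" "sw x' S' z'" "netv S \<le> netv S'" for S' x' z'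
      using less.hyps[of S' x' z'] that gt unfolding L_def by linarith
    have sw: "sw x S z" by fact
    have L0: "L \<noteq> 0" using gt L_def by auto
    have L1: "L \<noteq> 1"
    proof
      assume "L = 1"
      then obtain p where "S = [p]" unfolding L_def by (cases S) auto
      then obtain b k where S: "S = [(b,k)]" by (cases p) auto
      show False
      proof (cases b)
        case True
        with sw S have "(x,z) \<in> E^^k" by (auto simp: sw_Cons_iff elim: sw.cases)
        then show False using bnd gt S True by fastforce
      next
        case False
        then show False using gt S by simp
      qed
    qed
    have alt: "fst (S!i) \<noteq> fst (S!Suc i)" if "Suc i < L" for i
    proof
      assume eq: "fst (S!i) = fst (S!Suc i)"
      define s a b where "s = fst (S!i)" "a = snd (S!i)" "b = snd (S!Suc i)"
      have e1: "S!i = (s,a)" unfolding s_a_b_def by simp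
      have e2: "S!Suc i = (s,b)" using eq unfolding s_a_b_def by simp
      have "S = take i S @ [S!i, S!Suc i] @ drop (i+2) S"
        by (rule split2) (use that L_def in simp)
      then have Sd: "S = take i S @ [(s,a),(s,b)] @ drop (i+2) S" unfolding e1 e2 .
      have "sw x (take i S @ [(s,a),(s,b)] @ drop (i+2) S) z" using sw by (subst Sd[symmetric])
      then obtain y1 y2 where "sw x (take i S) y1" "sw y1 [(s,a),(s,b)] y2" "sw y2 (drop (i+2) S) z"
        unfolding sw_app by blast
      then have A1: "sw x (take i S @ [(s,a+b)] @ drop (i+2) S) z" using merge by (meson sw_app)
      have A2: "netv (take i S @ [(s,a+b)] @ drop (i+2) S) = netv S"
        by (subst (2) Sd) (cases s, auto)
      have A3: "length (take i S @ [(s,a+b)] @ drop (i+2) S) < L" using that unfolding L_def by simp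
      show False using dropok[OF A3 A1] A2 by simp
    qed
    have first: "fst (S!0) = True"
    proof (rule ccontr)
      assume "fst (S!0) \<noteq> True"
      obtain p S' where "S = p # S'" using L0 unfolding L_def by (cases S) auto
      then obtain k where S: "S = (False,k)#S'" using \<open>fst (S!0) \<noteq> True\<close>
        by (cases p) auto
      with sw obtain y where "sw y S' z" by (auto simp: sw_Cons_iff)
      then show False using dropok[of S' y z] S L_def by simp
    qed
    have last: "fst (S!(L-1)) = True"
    proof (rule ccontr)
      assume a: "fst (S!(L-1)) \<noteq> True"
      have e: "S!(L-1) = (False, snd (S!(L-1)))" using a by (cases "S!(L-1)") auto
      have "S = take (L-1) S @ [S!(L-1)]"
        using L0 unfolding L_def
        by (metis append_butlast_last_id butlast_conv_take last_conv_nth length_0_conv)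
      then have Sd: "S = take (L-1) S @ [(False, snd (S!(L-1)))]" unfolding e[symmetric] .
      have "sw x (take (L-1) S @ [(False, snd (S!(L-1)))]) z" using sw by (subst Sd[symmetric])
      then obtain y where "sw x (take (L-1) S) y" unfolding sw_app by blast
      moreover have "netv S \<le> netv (take (L-1) S)" by (subst Sd) simp
      moreover have "length (take (L-1) S) < L" using L0 L_def by simp
      ultimately show False using dropok by blast
    qed
    have sign: "fst (S!i) = even i" if "i < L" for i
      using that
    proof (induction i)
      case 0
      then show ?case using first by simp
    next
      case (Suc i)
      then show ?case using alt[of i] by auto
    qed
    have Lodd: "odd L" using sign[of "L-1"] last L0 by (cases L) auto
    then have L3: "3 \<le> L" using L0 L1 by presburger
    have c0: "snd (S!1) < snd (S!0)"
    proof (rule ccontr)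
      assume a: "\<not> snd (S!1) < snd (S!0)"
      define a0 b0 where "a0 = snd (S!0)" "b0 = snd (S!Suc 0)"
      have ab: "b0 \<ge> a0" using a unfolding a0_b0_def by simp
      have f1: "fst (S!0) = True" using sign[of 0] L3 by simp
      have f2: "fst (S!Suc 0) = False" using sign[of 1] L3 by simp
      have e1: "S!0 = (True, a0)" using f1 unfolding a0_b0_def by (cases "S!0") auto
      have e2: "S!Suc 0 = (False, b0)" using f2 unfolding a0_b0_def by (cases "S!Suc 0") auto
      have "S = take 0 S @ [S!0, S!Suc 0] @ drop (0+2) S"
        by (rule split2) (use L3 L_def in simp)
      then have Sd: "S = take 0 S @ [(True, a0), (False, b0)] @ drop (0+2) S" unfolding e1 e2 .
      have "sw x (take 0 S @ [(True, a0), (False, b0)] @ drop (0+2) S) z" using sw by (subst Sd[symmetric])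
      then obtain y where "sw y (drop (0+2) S) z" unfolding sw_app by blast
      moreover have "netv S \<le> netv (drop (0+2) S)" using ab by (subst Sd) simp
      moreover have "length (drop (0+2) S) < L" using L3 L_def by simp
      ultimately show False using dropok by blast
    qed
    have chain: "snd (S!Suc i) < snd (S!i)" if "Suc i < L" for i
      using that
    proof (induction i)
      case 0
      then show ?case using c0 by simp
    next
      case (Suc i)
      note ih = Suc.IH[OF Suc_lessD[OF Suc.prems]]
      show ?case
      proof (rule ccontr)
        assume a: "\<not> snd (S!Suc (Suc i)) < snd (S!Suc i)"
        define a b c where "a = snd (S!i)" "b = snd (S!Suc i)" "c = snd (S!Suc (Suc i))"
        have ba: "b \<le> a" "b \<le> c" using a ih unfolding a_b_c_def by auto
        define s where "s = even i"
        have e1: "S!i = (s,a)" using sign[of i] Suc.prems unfolding a_b_c_def s_def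
          by (cases "S!i") auto
        have e2: "S!Suc i = (\<not>s,b)" using sign[of "Suc i"] Suc.prems unfolding a_b_c_def s_def
          by (cases "S!Suc i") auto
        have e3: "S!Suc (Suc i) = (s,c)" using sign[of "Suc (Suc i)"] Suc.prems unfolding a_b_c_def s_def
          by (cases "S!Suc (Suc i)") auto
        have "S = take i S @ [S!i, S!Suc i, S!Suc(Suc i)] @ drop (i+3) S"
          by (rule split3) (use Suc.prems L_def in simp)
        then have Sd: "S = take i S @ [(s,a),(\<not>s,b),(s,c)] @ drop (i+3) S"
          unfolding e1 e2 e3 .
        have "sw x (take i S @ [(s,a),(\<not>s,b),(s,c)] @ drop (i+3) S) z" using sw by (subst Sd[symmetric])
        then obtain y1 y2 where w: "sw x (take i S) y1" "sw y1 [(s,a),(\<not>s,b),(s,c)] y2"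
          "sw y2 (drop (i+3) S) z" unfolding sw_app by blast
        have "sw (g y1) [(s,a+c-b)] (g y2)"
        proof (cases s)
          case True
          then show ?thesis using red_T[of y1 a b c y2] w(2) ba by simp
        next
          case False
          then show ?thesis using red_F[of y1 a b c y2] w(2) ba by simp
        qed
        then have A1: "sw (g x) (take i S @ [(s,a+c-b)] @ drop (i+3) S) (g z)"
          using sw_g[OF w(1)] sw_g[OF w(3)] by (meson sw_app)
        have A2: "netv (take i S @ [(s,a+c-b)] @ drop (i+3) S) = netv S"
          using ba by (subst (2) Sd) (cases s, auto)
        have A3: "length (take i S @ [(s,a+c-b)] @ drop (i+3) S) < L" using Suc.prems unfolding L_def by simp
        show False using dropok[OF A3 A1] A2 by simp
      qed
    qed
    define bL cL where "bL = snd (S!(L-2))" "cL = snd (S!Suc (L-2))"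
    have cb: "cL < bL" using chain[of "L-2"] L3 unfolding bL_cL_def by simp
    have e1: "S!(L-2) = (False, bL)"
    proof -
      have "fst (S!(L-2)) = False" using sign[of "L-2"] L3 Lodd by (simp add: even_diff_nat)
      then show ?thesis unfolding bL_cL_def by (cases "S!(L-2)") auto
    qed
    have e2: "S!Suc (L-2) = (True, cL)"
    proof -
      have "Suc (L-2) = L-1" using L3 by simp
      then have "fst (S!Suc (L-2)) = True" using last by simp
      then show ?thesis unfolding bL_cL_def by (cases "S!Suc (L-2)") auto
    qed
    have "S = take (L-2) S @ [S!(L-2), S!Suc (L-2)] @ drop (L-2+2) S"
      by (rule split2) (use L3 L_def in simp)
    then have Sd: "S = take (L-2) S @ [(False, bL), (True, cL)] @ drop (L-2+2) S"
      unfolding e1 e2 .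
    have "sw x (take (L-2) S @ [(False, bL), (True, cL)] @ drop (L-2+2) S) z" using sw by (subst Sd[symmetric])
    then obtain y where "sw x (take (L-2) S) y" unfolding sw_app by blast
    moreover have "netv S \<le> netv (take (L-2) S)"
      using cb L3 L_def by (subst Sd) simp
    moreover have "length (take (L-2) S) < L" using L3 L_def by simp
    ultimately show False using dropok by blast
  qed
qed

end

lemma walkV:
  assumes "\<forall>i<k. (p i, p (Suc i)) \<in> E" "E \<subseteq> V \<times> V" "0 < k" "i \<le> k"
  shows "p i \<in> V"
proof (cases "i < k")
  case True
  then show ?thesis using assms by blast
next
  case False
  then have "i = Suc (k-1)" using assms by simp
  moreover have "(p (k-1), p (Suc (k-1))) \<in> E"
  proof -
    have "k - 1 < k" using assms(3) by simp
    then show ?thesis using assms(1) by blast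
  qed
  ultimately show ?thesis using assms by blast
qed

lemma less3: "(j::nat) < 3 \<Longrightarrow> j = 0 \<or> j = 1 \<or> j = 2" by auto

lemma edges_power: "(us, vs) \<in> edges (power_digraph H k) \<longleftrightarrow>
   us \<in> tuples (verts H) k \<and> vs \<in> tuples (verts H) k \<and> (\<forall>i<k. (us ! i, vs ! i) \<in> edges H)"
  by (simp add: power_digraph_def edges_def)

lemma verts_power: "verts (power_digraph H k) = tuples (verts H) k"
  by (simp add: power_digraph_def verts_def)

lemma pol_edge: "polymorphism H k f \<Longrightarrow> (us, vs) \<in> edges (power_digraph H k) \<Longrightarrow> (f us, f vs) \<in> edges H"
  unfolding polymorphism_def hom_def by blast

lemma pol_vert: "polymorphism H k f \<Longrightarrow> us \<in> tuples (verts H) k \<Longrightarrow> f us \<in> verts H"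
  unfolding polymorphism_def hom_def verts_power by blast

lemma zigG:
  assumes dg: "digraph G" and pf: "polymorphism G 3 f"
    and idt: "\<forall>x\<in>verts G. \<forall>y\<in>verts G. f [y,y,x] = f [x,x,x] \<and> f [x,x,x] = f [x,y,y]"
    and h1: "(x,z) \<in> (edges G)^^k" and h2: "(y,z) \<in> (edges G)^^k" and h3: "(y,w) \<in> (edges G)^^k"
  shows "(f [x,x,x], f [w,w,w]) \<in> (edges G)^^k"
proof (cases "k = 0")
  case True
  then show ?thesis using h1 h2 h3 by simp
next
  case False
  have EV: "edges G \<subseteq> verts G \<times> verts G" using dg unfolding digraph_def .
  from h1 obtain p where p: "p 0 = x" "p k = z" "\<forall>i<k. (p i, p (Suc i)) \<in> edges G"
    unfolding relpow_fun_conv by blast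
  from h2 obtain q where q: "q 0 = y" "q k = z" "\<forall>i<k. (q i, q (Suc i)) \<in> edges G"
    unfolding relpow_fun_conv by blast
  from h3 obtain r where r: "r 0 = y" "r k = w" "\<forall>i<k. (r i, r (Suc i)) \<in> edges G"
    unfolding relpow_fun_conv by blast
  have V: "p i \<in> verts G" "q i \<in> verts G" "r i \<in> verts G" if "i \<le> k" for i
    using walkV[OF p(3) EV] walkV[OF q(3) EV] walkV[OF r(3) EV] False that by auto
  define t where "t i = [p i, q i, r i]" for i
  have tt: "t i \<in> tuples (verts G) 3" if "i \<le> k" for i
    using V[OF that] unfolding t_def tuples_def by auto
  have te: "(f (t i), f (t (Suc i))) \<in> edges G" if "i < k" for i
  proof -
    have "(t i, t (Suc i)) \<in> edges (power_digraph G 3)"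
      unfolding edges_power
    proof (intro conjI allI impI)
      show "t i \<in> tuples (verts G) 3" using tt that by simp
      show "t (Suc i) \<in> tuples (verts G) 3" using tt that by simp
      fix j :: nat assume "j < 3"
      then have "j = 0 \<or> j = 1 \<or> j = 2" by (rule less3)
      then show "(t i ! j, t (Suc i) ! j) \<in> edges G"
        using p(3) q(3) r(3) that unfolding t_def by (elim disjE) (simp_all add: numeral_2_eq_2)
    qed
    then show ?thesis using pol_edge[OF pf] by blast
  qed
  have xV: "x \<in> verts G" and yV: "y \<in> verts G" using V[of 0] p(1) q(1) by auto
  have zV: "z \<in> verts G" and wV: "w \<in> verts G" using V[of k] p(2) r(2) by auto
  have i1: "f [x,x,x] = f [x,y,y]" using idt xV yV by blast
  have i2: "f [z,z,w] = f [w,w,w]" using idt zV wV by blast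
  have t0: "f (t 0) = f [x,x,x]" unfolding t_def p(1) q(1) r(1) using i1 by (rule sym)
  have tk: "f (t k) = f [w,w,w]" unfolding t_def p(2) q(2) r(2) using i2 .
  show ?thesis unfolding relpow_fun_conv
    by (rule exI[of _ "\<lambda>i. f (t i)"]) (use t0 tk te in auto)
qed


lemma cycG:
  assumes dg: "digraph G" and cyc: "\<And>p. prime p \<Longrightarrow> has_cyclic_pol G p"
  shows "(x,x) \<in> (edges G)^^k \<Longrightarrow> 0 < k \<Longrightarrow> \<exists>y. (y,y) \<in> edges G"
proof (induction k arbitrary: x rule: less_induct)
  case (less k)
  have EV: "edges G \<subseteq> verts G \<times> verts G" using dg unfolding digraph_def .
  show ?case
  proof (cases "k = 1")
    case True
    then show ?thesis using less.prems by auto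
  next
    case False
    obtain p where pp: "prime p" "p dvd k" using prime_factor_nat[OF False] by blast
    obtain q where kq: "k = p * q" using pp(2) by (auto elim: dvdE)
    have p2: "2 \<le> p" using prime_ge_2_nat pp(1) by blast
    have q0: "0 < q" using kq less.prems(2) by (cases q) auto
    have "1 * q < p * q" using p2 q0 by (intro mult_strict_right_mono) auto
    then have qk: "q < k" using kq by simp
    obtain f where pf: "polymorphism G p f" and fc: "\<forall>xs\<in>tuples (verts G) p. f xs = f (rotate1 xs)"
      using cyc[OF pp(1)] unfolding has_cyclic_pol_def by blast
    from less.prems(1) obtain w where w: "w 0 = x" "w k = x" "\<forall>i<k. (w i, w (Suc i)) \<in> edges G"
      unfolding relpow_fun_conv by blast
    have k0: "0 < k" by fact
    define W where "W i = w (i mod k)" for i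
    have WE: "(W i, W (Suc i)) \<in> edges G" for i
    proof -
      have r: "i mod k < k" using k0 by simp
      then have e: "(w (i mod k), w (Suc (i mod k))) \<in> edges G" using w(3) by blast
      show ?thesis
      proof (cases "Suc (i mod k) = k")
        case True
        then have "W (Suc i) = w (Suc (i mod k))" unfolding W_def using w(1,2) by (simp add: mod_Suc)
        then show ?thesis using e unfolding W_def by simp
      next
        case False
        then have "W (Suc i) = w (Suc (i mod k))" unfolding W_def by (simp add: mod_Suc)
        then show ?thesis using e unfolding W_def by simp
      qed
    qed
    have WV: "W i \<in> verts G" for i using WE[of i] EV by blast
    have Wper: "W (i + k) = W i" for i unfolding W_def by simp
    define T where "T i = map (\<lambda>j. W (i + j*q)) [0..<p]" for i
    have Tt: "T i \<in> tuples (verts G) p" for i unfolding T_def tuples_def using WV by auto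
    have TE: "(T i, T (Suc i)) \<in> edges (power_digraph G p)" for i
      unfolding edges_power using Tt[of i] Tt[of "Suc i"] WE by (auto simp: T_def)
    have rot: "rotate1 (T i) = T (i + q)" for i
    proof (rule nth_equalityI)
      show "length (rotate1 (T i)) = length (T (i + q))" by (simp add: T_def)
      fix j assume "j < length (rotate1 (T i))"
      then have j: "j < p" by (simp add: T_def)
      have "rotate1 (T i) ! j = T i ! (Suc j mod p)" using j by (simp add: nth_rotate1 T_def)
      also have "\<dots> = T (i + q) ! j"
      proof (cases "Suc j < p")
        case True
        then show ?thesis using j by (simp add: T_def algebra_simps)
      next
        case False
        then have sj: "Suc j = p" using j by simp
        have "T (i + q) ! j = W (i + q + j * q)" using j by (simp add: T_def)
        also have "i + q + j * q = i + k" using kq sj[symmetric] by simp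
        also have "W (i + k) = W i" by (rule Wper)
        finally show ?thesis using sj p2 by (simp add: T_def)
      qed
      finally show "rotate1 (T i) ! j = T (i + q) ! j" .
    qed
    define h where "h i = f (T i)" for i
    have hE: "(h i, h (Suc i)) \<in> edges G" for i unfolding h_def using pol_edge[OF pf TE] .
    have hq: "h q = h 0"
    proof -
      have "h q = f (rotate1 (T 0))" unfolding h_def using rot[of 0] by simp
      also have "\<dots> = f (T 0)" using fc Tt[of 0] by simp
      finally show ?thesis unfolding h_def .
    qed
    have "(h 0, h 0) \<in> (edges G)^^q" unfolding relpow_fun_conv
      by (rule exI[of _ h]) (use hq hE in auto)
    then show ?thesis using less.IH[OF qk _ q0] by blast
  qed
qed


definition phiP :: "nat \<Rightarrow> atom list" where
  "phiP n = Edge 0 (2*n-1) # map (\<lambda>i. Eq (n+i) (Suc i)) [0..<n-1]"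

definition enc :: "nat \<Rightarrow> nat \<Rightarrow> nat list" where
  "enc n l = map (\<lambda>i. if i < n - l then 0 else 1) [0..<n]"

lemma P2_simps[simp]: "verts P2 = {0,1}" "edges P2 = {(0,1)}"
  by (auto simp: P2_def verts_def edges_def)

lemma pp_power_simps: "verts (pp_power H d phi) = tuples (verts H) d"
  "edges (pp_power H d phi) = {(us, vs). us \<in> tuples (verts H) d \<and> vs \<in> tuples (verts H) d \<and> pp_holds H d phi us vs}"
  by (auto simp: pp_power_def verts_def edges_def)

lemma sum_le: "set u \<subseteq> {0,1} \<Longrightarrow> sum_list u \<le> length (u::nat list)"
  by (induction u) auto

lemma enc_tuple: "enc n l \<in> tuples {0,1} n"
  by (auto simp: enc_def tuples_def)

lemma enc_edge:
  assumes "Suc l \<le> n"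
  shows "pp_holds P2 n (phiP n) (enc n l) (enc n (Suc l))"
  unfolding pp_holds_def
proof (rule exI[of _ "\<lambda>i. if i < n then enc n l ! i else if i < 2*n then enc n (Suc l) ! (i-n) else 0"],
    intro conjI allI impI ballI)
  fix i show "(if i < n then enc n l ! i else if i < 2*n then enc n (Suc l) ! (i-n) else 0) \<in> verts P2"
    by (auto simp: enc_def)
next
  fix i assume "i < n"
  then show "(if i < n then enc n l ! i else if i < 2*n then enc n (Suc l) ! (i-n) else 0) = enc n l ! i"
    by simp
next
  fix i assume "i < n"
  then show "(if n + i < n then enc n l ! (n+i) else if n + i < 2*n then enc n (Suc l) ! (n+i-n) else 0) = enc n (Suc l) ! i"
    by simp
next
  fix psi assume "psi \<in> set (phiP n)"
  then consider "psi = Edge 0 (2*n-1)" | i where "i < n - 1" "psi = Eq (n+i) (Suc i)"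
    unfolding phiP_def by auto
  then show "atom_sat P2 (\<lambda>i. if i < n then enc n l ! i else if i < 2*n then enc n (Suc l) ! (i-n) else 0) psi"
  proof cases
    case 1
    have "2*n-1-n = n - 1" by simp
    then show ?thesis using 1 assms by (auto simp: enc_def)
  next
    case 2
    then show ?thesis using assms by (auto simp: enc_def)
  qed
qed

lemma Q_edge:
  assumes h: "pp_holds P2 n (phiP n) u v" and u: "u \<in> tuples {0,1} n" and v: "v \<in> tuples {0,1} n"
  shows "sum_list v = Suc (sum_list u) \<and> sum_list v \<le> n"
proof -
  from h obtain a where aV: "\<forall>i. a i \<in> {0,1}" and au: "\<forall>i<n. a i = u ! i \<and> a (n+i) = v ! i"
    and sat: "\<forall>psi\<in>set (phiP n). atom_sat P2 a psi"
    unfolding pp_holds_def by auto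
  have e: "a 0 = 0" "a (2*n-1) = 1" using sat unfolding phiP_def by auto
  have n0: "n \<noteq> 0" using e by (cases n) auto
  have lu: "length u = n" and lv: "length v = n" and su: "set u \<subseteq> {0,1}" and sv: "set v \<subseteq> {0,1}"
    using u v unfolding tuples_def by auto
  have u0: "u ! 0 = 0" using au e n0 by auto
  have vl: "v ! (n-1) = 1" using au[rule_format, of "n-1"] e n0 by (simp add: mult_2)
  have sh: "v ! i = u ! Suc i" if "i < n - 1" for i
  proof -
    have "Eq (n+i) (Suc i) \<in> set (phiP n)" using that unfolding phiP_def by auto
    then have "a (n+i) = a (Suc i)" using sat by fastforce
    then show ?thesis using au that by auto
  qed
  have ud: "u = 0 # tl u" using u0 n0 lu by (cases u) auto
  have vd: "v = tl u @ [1]"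
  proof (rule nth_equalityI)
    show "length v = length (tl u @ [1])" using lu lv n0 by simp
    fix i assume i: "i < length v"
    show "v ! i = (tl u @ [1]) ! i"
    proof (cases "i < n - 1")
      case True
      then show ?thesis using sh[of i] lu by (auto simp: nth_append nth_tl)
    next
      case False
      then have "i = n - 1" using i lv by simp
      then show ?thesis using vl lu by (auto simp: nth_append)
    qed
  qed
  have "sum_list v = Suc (sum_list u)" by (subst vd, subst ud) simp
  moreover have "sum_list v \<le> n" using sum_le[OF sv] lv by simp
  ultimately show ?thesis by simp
qed


theorem mainTheorem4:
  fixes G :: "'a digraph"
  assumes "digraph G"
    and "finite (verts G)"
    and "verts G \<noteq> {}"
    and "has_SigmaM_pol G"
    and "\<And>p. prime p \<Longrightarrow> has_cyclic_pol G p"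
  shows "pp_le P2 G"
proof -
  have EV: "edges G \<subseteq> verts G \<times> verts G" using assms(1) unfolding digraph_def .
  obtain f where pf: "polymorphism G 3 f"
    and idt: "\<forall>x\<in>verts G. \<forall>y\<in>verts G. f [y,y,x] = f [x,x,x] \<and> f [x,x,x] = f [x,y,y]"
    using assms(4) unfolding has_SigmaM_pol_def by blast
  have t0: "tuples {0::nat,1} 0 = {[]}" by (auto simp: tuples_def)
  show ?thesis
  proof (cases "\<exists>x. (x,x) \<in> edges G")
    case True
    then obtain x where x: "(x,x) \<in> edges G" by blast
    have xV: "x \<in> verts G" using EV x by blast
    have hp: "pp_holds P2 0 [] [] []" unfolding pp_holds_def by (rule exI[of _ "\<lambda>_. 0"]) simp
    have "hom (\<lambda>_. []) G (pp_power P2 0 [])" unfolding hom_def pp_power_simps P2_simps t0 using hp by auto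
    moreover have "hom (\<lambda>_. x) (pp_power P2 0 []) G" unfolding hom_def using xV x by auto
    ultimately show ?thesis unfolding pp_le_def hom_equiv_def by blast
  next
    case False
    have acyc: "k = 0" if "(x,x) \<in> (edges G)^^k" for x k
      using cycG[OF assms(1) assms(5) that] False by blast
    define Ws where "Ws = {k. \<exists>x\<in>verts G. \<exists>y. (x,y) \<in> (edges G)^^k}"
    have Wb: "k < card (verts G)" if kW: "k \<in> Ws" for k
    proof (rule ccontr)
      assume nk: "\<not> k < card (verts G)"
      obtain x y where xV: "x \<in> verts G" and xy: "(x,y) \<in> (edges G)^^k" using kW Ws_def by blast
      have "card (verts G) > 0" using assms(2,3) by (simp add: card_gt_0_iff)
      then have k0: "0 < k" using nk by simp
      obtain w where w: "w 0 = x" "w k = y" "\<forall>i<k. (w i, w (Suc i)) \<in> edges G"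
        using xy unfolding relpow_fun_conv by blast
      have wV: "w ` {0..k} \<subseteq> verts G" using walkV[OF w(3) EV k0] by auto
      have ninj: "\<not> inj_on w {0..k}"
      proof
        assume "inj_on w {0..k}"
        then have "card (w ` {0..k}) = Suc k" by (simp add: card_image)
        moreover have "card (w ` {0..k}) \<le> card (verts G)" using card_mono[OF assms(2) wV] .
        ultimately show False using nk by simp
      qed
      obtain i j where ij: "i < j" "j \<le> k" "w i = w j"
      proof -
        from ninj obtain a b where ab: "a \<in> {0..k}" "b \<in> {0..k}" "w a = w b" "a \<noteq> b"
          unfolding inj_on_def by blast
        show ?thesis
        proof (cases "a < b")
          case True
          then show ?thesis using that[of a b] ab by auto
        next
          case False
          then show ?thesis using that[of b a] ab by auto
        qed
      qed
      have "(w i, w j) \<in> (edges G)^^(j-i)" unfolding relpow_fun_conv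
        by (rule exI[of _ "\<lambda>t. w (i+t)"]) (use ij w(3) in auto)
      then have "j - i = 0" using acyc ij(3) by metis
      then show False using ij by simp
    qed
    have finW: "finite Ws" using Wb by (meson finite_nat_set_iff_bounded)
    obtain x0 where x0: "x0 \<in> verts G" using assms(3) by blast
    have W0: "0 \<in> Ws" unfolding Ws_def using x0 by auto
    define n where "n = Max Ws"
    have bnd: "k \<le> n" if xyk: "(x,y) \<in> (edges G)^^k" for x y k
    proof (cases "k = 0")
      case True then show ?thesis by simp
    next
      case False
      obtain w where w: "w 0 = x" "w k = y" "\<forall>i<k. (w i, w (Suc i)) \<in> edges G"
        using xyk unfolding relpow_fun_conv by blast
      have "x \<in> verts G" using w(1) w(3)[rule_format, of 0] False EV by auto
      then have "k \<in> Ws" unfolding Ws_def using xyk by blast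
      then show ?thesis unfolding n_def using finW by simp
    qed
    have "n \<in> Ws" unfolding n_def using finW W0 by (intro Max_in) auto
    then obtain xs ys where xs: "xs \<in> verts G" and xys: "(xs,ys) \<in> (edges G)^^n"
      unfolding Ws_def by blast
    obtain p where p: "p 0 = xs" "p n = ys" "\<forall>i<n. (p i, p (Suc i)) \<in> edges G"
      using xys unfolding relpow_fun_conv by blast
    have pV: "p i \<in> verts G" if "i \<le> n" for i
    proof (cases "n = 0")
      case True then show ?thesis using that p(1) xs by simp
    next
      case False then show ?thesis using walkV[OF p(3) EV _ that] by simp
    qed
    define g where "g x = f [x,x,x]" for x
    interpret Z: zz "edges G" g n
    proof
      fix x y z w k
      assume "(x, z) \<in> edges G ^^ k" "(y, z) \<in> edges G ^^ k" "(y, w) \<in> edges G ^^ k"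
      then show "(g x, g w) \<in> edges G ^^ k" unfolding g_def by (rule zigG[OF assms(1) pf idt])
    next
      fix x y k assume "(x, y) \<in> edges G ^^ k" then show "k \<le> n" by (rule bnd)
    qed
    define P where "P v k \<longleftrightarrow> (\<exists>x S. Z.sw x S v \<and> Z.netv S = int k)" for v k
    define lam where "lam v = (GREATEST k. P v k)" for v
    have P0: "P v 0" for v unfolding P_def using Z.sw.nil by fastforce
    have Pb: "k \<le> n" if "P v k" for v k
      using that Z.net_bound unfolding P_def by fastforce
    have lamP: "P v (lam v)" for v unfolding lam_def by (rule GreatestI_nat[of "P v" 0 n, OF P0 Pb])
    have lamge: "k \<le> lam v" if "P v k" for v k unfolding lam_def by (rule Greatest_le_nat[of "P v" k n, OF that Pb])
    have lamn: "lam v \<le> n" for v using Pb[OF lamP] .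
    have lamE: "lam v = Suc (lam u)" if uv: "(u,v) \<in> edges G" for u v
    proof -
      have uv1: "(u,v) \<in> (edges G)^^1" using uv by simp
      from lamP[of u] obtain x S where S: "Z.sw x S u" "Z.netv S = int (lam u)" unfolding P_def by blast
      have "Z.sw u [(True,1)] v" using Z.sw.fw[OF uv1 Z.sw.nil] .
      then have "Z.sw x (S @ [(True,1)]) v" using S(1) Z.sw_app by blast
      moreover have "Z.netv (S @ [(True,1)]) = int (Suc (lam u))" using S(2) by simp
      ultimately have "P v (Suc (lam u))" unfolding P_def by blast
      then have a: "Suc (lam u) \<le> lam v" by (rule lamge)
      from lamP[of v] obtain x' S' where S': "Z.sw x' S' v" "Z.netv S' = int (lam v)" unfolding P_def by blast
      have "Z.sw v [(False,1)] u" using Z.sw.bw[OF uv1 Z.sw.nil] .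
      then have "Z.sw x' (S' @ [(False,1)]) u" using S'(1) Z.sw_app by blast
      moreover have "Z.netv (S' @ [(False,1)]) = int (lam v - 1)" using S'(2) a by simp
      ultimately have "P u (lam v - 1)" unfolding P_def by blast
      then have "lam v - 1 \<le> lam u" by (rule lamge)
      then show ?thesis using a by simp
    qed
    have hom1: "hom (\<lambda>v. enc n (lam v)) G (pp_power P2 n (phiP n))"
      unfolding hom_def pp_power_simps P2_simps
    proof (intro conjI ballI)
      fix v show "enc n (lam v) \<in> tuples {0,1} n" by (rule enc_tuple)
    next
      fix e assume "e \<in> edges G"
      then obtain u v where e: "e = (u,v)" "(u,v) \<in> edges G" by (cases e) auto
      have l: "lam v = Suc (lam u)" using lamE[OF e(2)] .
      have "Suc (lam u) \<le> n" using lamn[of v] l by simp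
      then have "pp_holds P2 n (phiP n) (enc n (lam u)) (enc n (lam v))" using enc_edge l by simp
      then show "case e of (x, y) \<Rightarrow> (enc n (lam x), enc n (lam y)) \<in>
        {(us, vs). us \<in> tuples {0, 1} n \<and> vs \<in> tuples {0, 1} n \<and> pp_holds P2 n (phiP n) us vs}"
        using e enc_tuple by simp
    qed
    have hom2: "hom (\<lambda>u. p (sum_list u)) (pp_power P2 n (phiP n)) G"
      unfolding hom_def pp_power_simps P2_simps
    proof (intro conjI ballI)
      fix u assume "u \<in> tuples {0::nat,1} n"
      then have "sum_list u \<le> n" using sum_le unfolding tuples_def by fastforce
      then show "p (sum_list u) \<in> verts G" by (rule pV)
    next
      fix e assume "e \<in> {(us, vs). us \<in> tuples {0::nat, 1} n \<and> vs \<in> tuples {0, 1} n \<and> pp_holds P2 n (phiP n) us vs}"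
      then obtain u v where e: "e = (u,v)" "u \<in> tuples {0,1} n" "v \<in> tuples {0,1} n" "pp_holds P2 n (phiP n) u v"
        by auto
      have "sum_list v = Suc (sum_list u) \<and> sum_list v \<le> n" using Q_edge[OF e(4) e(2) e(3)] .
      then have "(p (sum_list u), p (sum_list v)) \<in> edges G" using p(3) by auto
      then show "case e of (x, y) \<Rightarrow> (p (sum_list x), p (sum_list y)) \<in> edges G" using e by simp
    qed
    show ?thesis unfolding pp_le_def hom_equiv_def using hom1 hom2 by blast
  qed
qed

end
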